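(* Let $A$ be a real $N\times N$ matrix, $B$ a real $N\times m$ matrix and $K$ a real $m\times N$ matrix, and set $A_1=-BK$. Suppose there exist symmetric $N\times N$ matrices $P>0$ and $Q>0$ such that $(A+A_1)^\top P+P(A+A_1)=-Q$, so that $V(x)=x^\top P x$ is a Lyapunov function for the continuous closed-loop system $\dot x(t)=(A+A_1)x(t)$, with $\dot V(x)=-x^\top Q x<0$ for $x\neq 0$. Then there is a constant $c'>0$ such that, for every hold length $$\Delta\le c'\,\frac{\sigma_{\min}(Q)}{\sigma_{\max}(P)\,\big(\sigma_{\max}(A)+\sigma_{\max}(A_1)\big)^2},$$ the sampled-data (piecewise-constant control) system $$\dot x(t)=Ax(t)+A_1x(t_k),\qquad t\in[t_k,t_{k+1}),\ k=0,1,\dots,$$ with sampling instants satisfying $t_{k+1}-t_k\le\Delta$, is asymptotically stable.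
   Context: $\sigma_{\min}(\cdot)$ and $\sigma_{\max}(\cdot)$ denote the minimum and maximum singular values of a matrix. The sampling instants $0=t_0<t_1<t_2<\cdots$ are such that the control $A_1x(t_k)$ is held constant on each holding period $[t_k,t_{k+1})$ (zero-order hold). $x(t)$ is the error state relative to the equilibrium $0$. *)

theory Defs
  imports "HOL-Analysis.Analysis"
begin

text \<open>Largest singular value = operator 2-norm of the induced linear map.\<close>
definition sigma_max :: "real^'n^'m \<Rightarrow> real" where
  "sigma_max M = onorm (\<lambda>x. M *v x)"

definition sigma_min :: "real^'n^'m \<Rightarrow> real" where
  "sigma_min M = Inf {norm (M *v x) | x. norm x = 1}"

definition sym_pos_def :: "real^'n^'n \<Rightarrow> bool" where
  "sym_pos_def P \<longleftrightarrow> transpose P = P \<and> (\<forall>x. x \<noteq> 0 \<longrightarrow> 0 < x \<bullet> (P *v x))"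

text \<open>x is a solution of the sampled-data system  x' = A x(t) + A1 x(t_k) on every
  holding interval [t_k, t_{k+1}) (continuous, with left derivative at t_{k+1}).\<close>
definition sampled_solution ::
  "real^'n^'n \<Rightarrow> real^'n^'n \<Rightarrow> (nat \<Rightarrow> real) \<Rightarrow> (real \<Rightarrow> real^'n) \<Rightarrow> bool" where
  "sampled_solution A A1 ts x \<longleftrightarrow>
     (\<forall>k. \<forall>s\<in>{ts k..ts (Suc k)}.
        (x has_vector_derivative (A *v x s + A1 *v x (ts k))) (at s within {ts k..ts (Suc k)}))"

definition sampled_asymp_stable ::
  "real^'n^'n \<Rightarrow> real^'n^'n \<Rightarrow> (nat \<Rightarrow> real) \<Rightarrow> bool" where
  "sampled_asymp_stable A A1 ts \<longleftrightarrow>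
     (\<forall>\<epsilon>>0. \<exists>\<delta>>0. \<forall>x. sampled_solution A A1 ts x \<and> norm (x 0) < \<delta> \<longrightarrow>
          (\<forall>t\<ge>0. norm (x t) < \<epsilon>)) \<and>
     (\<exists>\<eta>>0. \<forall>x. sampled_solution A A1 ts x \<and> norm (x 0) < \<eta> \<longrightarrow>
          (x \<longlongrightarrow> 0) at_top)"

end

theory Submission
  imports Defs
begin

lemma sym_dot:
  fixes M :: "real^'n^'n"
  assumes "transpose M = M"
  shows "x \<bullet> (M *v y) = (M *v x) \<bullet> y"
proof -
  have "x \<bullet> (M *v y) = (x v* M) \<bullet> y" by (simp add: dot_lmul_matrix)
  also have "x v* M = transpose M *v x" by simp
  finally show ?thesis using assms by simp
qed

lemma transp_dot:
  fixes M :: "real^'n^'n"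
  shows "x \<bullet> (transpose M *v y) = (M *v x) \<bullet> y"
proof -
  show ?thesis by (metis dot_lmul_matrix vector_transpose_matrix)
qed

lemma norm_mv: "norm ((M::real^'n^'m) *v x) \<le> sigma_max M * norm x"
  unfolding sigma_max_def by (rule onorm) simp

lemma sigma_max_nonneg: "0 \<le> sigma_max (M::real^'n^'m)"
  unfolding sigma_max_def by (rule onorm_pos_le) simp

lemma sigma_min_le: "norm v = 1 \<Longrightarrow> sigma_min (M::real^'n^'m) \<le> norm (M *v v)"
  unfolding sigma_min_def
  by (rule cInf_lower) (auto intro: bdd_belowI[where m=0])

lemma quad_zero:
  fixes a c :: real
  assumes "\<And>s. 0 \<le> 2 * s * a + s^2 * c"
  shows "a = 0"
proof -
  define s where "s = - a / (\<bar>c\<bar> + 1)"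
  have d: "\<bar>c\<bar> + 1 > 0" by simp
  have "0 \<le> 2 * s * a + s^2 * c" by (rule assms)
  then have "0 \<le> (2 * s * a + s^2 * c) * (\<bar>c\<bar> + 1)^2" by simp
  also have "(2 * s * a + s^2 * c) * (\<bar>c\<bar> + 1)^2 = 2 * a * (s * (\<bar>c\<bar> + 1)) * (\<bar>c\<bar> + 1) + c * (s * (\<bar>c\<bar> + 1))^2"
    by (simp add: algebra_simps power2_eq_square)
  also have "s * (\<bar>c\<bar> + 1) = - a" unfolding s_def using d by simp
  also have "2 * a * (- a) * (\<bar>c\<bar> + 1) + c * (- a)^2 = a^2 * (c - 2*\<bar>c\<bar> - 2)"
    by (simp add: algebra_simps power2_eq_square)
  finally have "0 \<le> a^2 * (c - 2*\<bar>c\<bar> - 2)" .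
  moreover have "c - 2*\<bar>c\<bar> - 2 < 0" by linarith
  ultimately have "a^2 \<le> 0" by (simp add: zero_le_mult_iff)
  then show ?thesis by simp
qed

lemma quad_min:
  fixes M :: "real^'n^'n"
  assumes sym: "transpose M = M"
  obtains v where "norm v = 1" "\<And>x. (v \<bullet> (M *v v)) * (norm x)^2 \<le> x \<bullet> (M *v x)"
    "M *v v = (v \<bullet> (M *v v)) *\<^sub>R v"
proof -
  have cont: "continuous_on (sphere 0 1) (\<lambda>x::real^'n. x \<bullet> (M *v x))"
    by (intro continuous_intros linear_continuous_on matrix_vector_mul_bounded_linear)
  obtain w :: "real^'n" where "norm w = 1" using vector_choose_size[of 1] by auto
  then have ne: "sphere (0::real^'n) 1 \<noteq> {}" by auto
  obtain v where v: "v \<in> sphere 0 1" and vmin: "\<And>y. y \<in> sphere 0 1 \<Longrightarrow> v \<bullet> (M *v v) \<le> y \<bullet> (M *v y)"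
    using continuous_attains_inf[OF compact_sphere ne cont] by blast
  have nv: "norm v = 1" using v by simp
  define mu where "mu = v \<bullet> (M *v v)"
  have hmin: "mu * (norm x)^2 \<le> x \<bullet> (M *v x)" for x
  proof (cases "x = 0")
    case True then show ?thesis by simp
  next
    case False
    define u where "u = (1 / norm x) *\<^sub>R x"
    have "norm u = 1" using False unfolding u_def by simp
    then have "mu \<le> u \<bullet> (M *v u)" using vmin unfolding mu_def by simp
    also have "u \<bullet> (M *v u) = (1 / norm x)^2 * (x \<bullet> (M *v x))"
      unfolding u_def by (simp add: matrix_vector_mult_scaleR power2_eq_square)
    finally have "mu * (norm x)^2 \<le> (1 / norm x)^2 * (x \<bullet> (M *v x)) * (norm x)^2"
      by (simp add: mult_right_mono)
    also have "\<dots> = x \<bullet> (M *v x)" using False by (simp add: field_simps)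
    finally show ?thesis .
  qed
  define d where "d = M *v v - mu *\<^sub>R v"
  have "0 \<le> 2 * s * (d \<bullet> d) + s^2 * (d \<bullet> (M *v d) - mu * (d \<bullet> d))" for s
  proof -
    have h: "mu * (norm (v + s *\<^sub>R d))^2 \<le> (v + s *\<^sub>R d) \<bullet> (M *v (v + s *\<^sub>R d))"
      by (rule hmin)
    have n2: "(norm (v + s *\<^sub>R d))^2 = 1 + 2 * s * (v \<bullet> d) + s^2 * (d \<bullet> d)"
    proof -
      have vv: "v \<bullet> v = 1" using nv by (simp add: norm_eq_sqrt_inner)
      show ?thesis unfolding power2_norm_eq_inner
        using vv by (simp add: inner_add_left inner_add_right inner_commute algebra_simps power2_eq_square)
    qed
    have vd: "v \<bullet> (M *v d) = d \<bullet> (M *v v)"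
      using sym_dot[OF sym, of v d] by (simp add: inner_commute)
    have q2: "(v + s *\<^sub>R d) \<bullet> (M *v (v + s *\<^sub>R d)) = mu + 2 * s * (d \<bullet> (M *v v)) + s^2 * (d \<bullet> (M *v d))"
      unfolding mu_def using vd
      by (simp add: matrix_vector_right_distrib matrix_vector_mult_scaleR inner_add_left inner_add_right algebra_simps power2_eq_square)
    have dd: "d \<bullet> (M *v v) - mu * (v \<bullet> d) = d \<bullet> d"
      unfolding d_def by (simp add: inner_diff_left inner_diff_right inner_commute algebra_simps)
    from h n2 q2 have "0 \<le> 2 * s * (d \<bullet> (M *v v) - mu * (v \<bullet> d)) + s^2 * (d \<bullet> (M *v d) - mu * (d \<bullet> d))"
      by (simp add: algebra_simps)
    then show ?thesis using dd by simp
  qed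
  then have "d \<bullet> d = 0" by (rule quad_zero)
  then have "d = 0" by simp
  then have "M *v v = mu *\<^sub>R v" unfolding d_def by simp
  then show ?thesis using that nv hmin unfolding mu_def by blast
qed

lemma interval_err:
  fixes A A1 :: "real^'n^'n" and x :: "real \<Rightarrow> real^'n"
  assumes der: "\<And>s. s \<in> {t0..t1} \<Longrightarrow> (x has_vector_derivative (A *v x s + A1 *v x t0)) (at s within {t0..t1})"
    and t01: "t0 \<le> t1" "t1 - t0 \<le> D"
    and nA: "\<And>y. norm (A *v y) \<le> a * norm y" and nA1: "\<And>y. norm (A1 *v y) \<le> b * norm y"
    and ab: "0 \<le> a" "0 \<le> b" and th: "(a + b) * D \<le> 1/4" and D0: "0 \<le> D"
    and s: "s \<in> {t0..t1}"
  shows "norm (x s - x t0) \<le> 4 * ((a + b) * D) * norm (x s)"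
proof -
  let ?I = "{t0..t1}"
  define th where "th = (a + b) * D"
  have th0: "0 \<le> th" unfolding th_def using ab D0 by simp
  have th1: "th \<le> 1/4" unfolding th_def using th .
  have cont: "continuous_on ?I x" by (rule continuous_on_vector_derivative) (rule der)
  have ne: "?I \<noteq> {}" using t01 by simp
  obtain s0 where s0: "s0 \<in> ?I" and smax: "\<And>y. y \<in> ?I \<Longrightarrow> norm (x y) \<le> norm (x s0)"
    using continuous_attains_sup[OF compact_Icc ne continuous_on_norm[OF cont]] by auto
  define Mx where "Mx = norm (x s0)"
  have t0I: "t0 \<in> ?I" using t01 by simp
  have xkM: "norm (x t0) \<le> Mx" unfolding Mx_def using smax[OF t0I] .
  have bnd: "norm (x y - x t0) \<le> th * Mx" if y: "y \<in> ?I" for y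
  proof -
    have "norm (x y - x t0) \<le> (a * Mx + b * norm (x t0)) * norm (y - t0)"
    proof (rule differentiable_bound[where f' = "\<lambda>s h. h *\<^sub>R (A *v x s + A1 *v x t0)"])
      show "convex ?I" by simp
      show "(x has_derivative (\<lambda>h. h *\<^sub>R (A *v x s + A1 *v x t0))) (at s within ?I)" if "s \<in> ?I" for s
        using der[OF that] unfolding has_vector_derivative_def .
      show "onorm (\<lambda>h. h *\<^sub>R (A *v x s + A1 *v x t0)) \<le> a * Mx + b * norm (x t0)" if "s \<in> ?I" for s
      proof -
        have "onorm (\<lambda>h::real. h *\<^sub>R (A *v x s + A1 *v x t0)) = norm (A *v x s + A1 *v x t0)"
          using onorm_scaleR_left[OF bounded_linear_ident, of "A *v x s + A1 *v x t0"] by (simp add: onorm_id)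
        also have "\<dots> \<le> norm (A *v x s) + norm (A1 *v x t0)" by (rule norm_triangle_ineq)
        also have "\<dots> \<le> a * norm (x s) + b * norm (x t0)" using nA nA1 by (intro add_mono) auto
        also have "\<dots> \<le> a * Mx + b * norm (x t0)"
          using smax[OF that] ab unfolding Mx_def by (simp add: mult_left_mono)
        finally show ?thesis .
      qed
    qed (use y t0I in auto)
    also have "\<dots> \<le> (a * Mx + b * Mx) * D"
    proof (rule mult_mono)
      have "0 \<le> Mx" using xkM norm_ge_zero[of "x t0"] by linarith
      then show "a * Mx + b * Mx \<ge> 0" using ab by simp
      show "a * Mx + b * norm (x t0) \<le> a * Mx + b * Mx" using xkM ab by (simp add: mult_left_mono)
      show "norm (y - t0) \<le> D" using y t01 by simp
    qed simp
    also have "\<dots> = th * Mx" unfolding th_def by (simp add: algebra_simps)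
    finally show ?thesis .
  qed
  have M0: "0 \<le> Mx" unfolding Mx_def by simp
  have "Mx \<le> norm (x t0) + th * Mx"
    using bnd[OF s0] norm_triangle_ineq2[of "x s0" "x t0"] unfolding Mx_def by linarith
  moreover have "th * Mx \<le> (1/4) * Mx" using th1 M0 by (rule mult_right_mono)
  ultimately have M2: "Mx \<le> 2 * norm (x t0)" using norm_ge_zero[of "x t0"] by linarith
  have thM: "th * Mx \<le> th * (2 * norm (x t0))" using M2 th0 by (rule mult_left_mono)
  have "norm (x t0) \<le> norm (x s) + th * Mx"
    using bnd[OF s] norm_triangle_ineq3[of "x s" "x t0"] norm_minus_commute[of "x s" "x t0"] by linarith
  moreover have "th * (2 * norm (x t0)) \<le> (1/4) * (2 * norm (x t0))" using th1 by (rule mult_right_mono) simp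
  ultimately have xk2: "norm (x t0) \<le> 2 * norm (x s)" using thM by linarith
  have "norm (x s - x t0) \<le> th * (2 * norm (x t0))" using bnd[OF s] thM by linarith
  also have "\<dots> \<le> th * (2 * (2 * norm (x s)))" using xk2 th0 by (intro mult_left_mono) auto
  finally show ?thesis unfolding th_def by simp
qed

lemma mono_from_deriv:
  fixes f f' :: "real \<Rightarrow> real"
  assumes ab: "a \<le> b"
    and der: "\<And>s. s \<in> {a..b} \<Longrightarrow> (f has_real_derivative f' s) (at s within {a..b})"
    and neg: "\<And>s. s \<in> {a..b} \<Longrightarrow> f' s \<le> 0"
    and t: "t \<in> {a..b}"
  shows "f t \<le> f a"
proof (cases "t = a")
  case True then show ?thesis by simp
next
  case False
  then have at: "a < t" using t by simp
  have c: "continuous_on {a..b} f" by (rule DERIV_continuous_on) (rule der)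
  have c2: "continuous_on {a..t} f" by (rule continuous_on_subset[OF c]) (use t in auto)
  have dz: "(f has_real_derivative f' z) (at z)" if "a < z" "z < t" for z
  proof -
    have "(f has_real_derivative f' z) (at z within {a..b})" using that t by (intro der) auto
    moreover have "at z within {a..b} = at z" using that t by (intro at_within_Icc_at) auto
    ultimately show ?thesis by simp
  qed
  obtain l z where z: "a < z" "z < t" and dl: "DERIV f z :> l" and eq: "f t - f a = (t - a) * l"
    using MVT[OF at c2] dz real_differentiable_def by blast
  have "l = f' z" using DERIV_unique[OF dl dz[OF z]] .
  then have "l \<le> 0" using neg z t by simp
  then have "(t - a) * l \<le> 0" using at by (simp add: mult_nonneg_nonpos)
  then show ?thesis using eq by simp
qed

lemma interval_W:
  fixes A A1 P Q :: "real^'n^'n" and x :: "real \<Rightarrow> real^'n"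
  assumes der: "\<And>s. s \<in> {t0..t1} \<Longrightarrow> (x has_vector_derivative (A *v x s + A1 *v x t0)) (at s within {t0..t1})"
    and t01: "t0 \<le> t1"
    and symP: "transpose P = P"
    and nP: "\<And>y. norm (P *v y) \<le> p * norm y" and p0: "0 < p"
    and nA1: "\<And>y. norm (A1 *v y) \<le> b * norm y" and b0: "0 \<le> b"
    and Qquad: "\<And>y. q * (norm y)^2 \<le> y \<bullet> (Q *v y)" and q0: "0 \<le> q"
    and Qeq: "\<And>y. y \<bullet> (Q *v y) = - 2 * ((P *v y) \<bullet> ((A + A1) *v y))"
    and err: "\<And>s. s \<in> {t0..t1} \<Longrightarrow> norm (x s - x t0) \<le> 4 * e * norm (x s)"
    and e0: "0 \<le> e"
    and key: "8 * p * b * e \<le> q / 2"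
    and t: "t \<in> {t0..t1}"
  shows "exp ((q / (2 * p)) * t) * (x t \<bullet> (P *v x t)) \<le> exp ((q / (2 * p)) * t0) * (x t0 \<bullet> (P *v x t0))"
proof -
  define g where "g = q / (2 * p)"
  define Dv where "Dv s = A *v x s + A1 *v x t0" for s
  define V' where "V' s = x s \<bullet> (P *v Dv s) + Dv s \<bullet> (P *v x s)" for s
  have dV: "((\<lambda>s. x s \<bullet> (P *v x s)) has_real_derivative V' s) (at s within {t0..t1})"
    if s: "s \<in> {t0..t1}" for s
  proof -
    have d1: "(x has_vector_derivative Dv s) (at s within {t0..t1})" using der[OF s] unfolding Dv_def .
    have d2: "((\<lambda>s. P *v x s) has_vector_derivative P *v Dv s) (at s within {t0..t1})"
      by (rule bounded_linear.has_vector_derivative[OF matrix_vector_mul_bounded_linear d1])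
    have "((\<lambda>s. x s \<bullet> (P *v x s)) has_vector_derivative (x s \<bullet> (P *v Dv s) + Dv s \<bullet> (P *v x s))) (at s within {t0..t1})"
      by (rule bounded_bilinear.has_vector_derivative[OF bounded_bilinear_inner d1 d2])
    then show ?thesis unfolding V'_def has_real_derivative_iff_has_vector_derivative .
  qed
  have dW: "((\<lambda>s. exp (g * s) * (x s \<bullet> (P *v x s))) has_real_derivative
      exp (g * s) * (g * (x s \<bullet> (P *v x s)) + V' s)) (at s within {t0..t1})"
    if s: "s \<in> {t0..t1}" for s
    by (rule derivative_eq_intros dV[OF s] | simp)+ (simp add: algebra_simps)
  have neg: "exp (g * s) * (g * (x s \<bullet> (P *v x s)) + V' s) \<le> 0" if s: "s \<in> {t0..t1}" for s
  proof -
    let ?y = "x s"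
    let ?d = "x t0 - x s"
    have V'eq: "V' s = 2 * ((P *v ?y) \<bullet> Dv s)"
      unfolding V'_def using sym_dot[OF symP, of "?y" "Dv s"] by (simp add: inner_commute)
    have Dveq: "Dv s = (A + A1) *v ?y + A1 *v ?d"
      unfolding Dv_def by (simp add: matrix_vector_mult_add_rdistrib matrix_vector_right_distrib algebra_simps)
    have t1: "2 * ((P *v ?y) \<bullet> ((A + A1) *v ?y)) \<le> - q * (norm ?y)^2"
      using Qquad[of ?y] Qeq[of ?y] by simp
    have "2 * ((P *v ?y) \<bullet> (A1 *v ?d)) \<le> 2 * (norm (P *v ?y) * norm (A1 *v ?d))"
      using norm_cauchy_schwarz by simp
    also have "\<dots> \<le> 2 * ((p * norm ?y) * (b * norm ?d))"
      using nP nA1 by (intro mult_left_mono mult_mono) (auto simp: mult_nonneg_nonneg p0 b0 less_imp_le)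
    also have "\<dots> \<le> 2 * ((p * norm ?y) * (b * (4 * e * norm ?y)))"
    proof -
      have "norm ?d \<le> 4 * e * norm ?y" using err[OF s] by (simp add: norm_minus_commute)
      then show ?thesis using p0 b0 by (intro mult_left_mono) (auto simp: less_imp_le)
    qed
    also have "\<dots> = (8 * p * b * e) * (norm ?y)^2" by (simp add: power2_eq_square algebra_simps)
    also have "\<dots> \<le> (q / 2) * (norm ?y)^2" using key by (rule mult_right_mono) simp
    finally have t2: "2 * ((P *v ?y) \<bullet> (A1 *v ?d)) \<le> (q / 2) * (norm ?y)^2" .
    have V'le: "V' s \<le> - (q / 2) * (norm ?y)^2"
      using t1 t2 unfolding V'eq Dveq by (simp add: inner_add_right algebra_simps)
    have "?y \<bullet> (P *v ?y) \<le> norm ?y * norm (P *v ?y)" by (rule norm_cauchy_schwarz)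
    also have "\<dots> \<le> norm ?y * (p * norm ?y)" using nP by (intro mult_left_mono) auto
    finally have Vle: "?y \<bullet> (P *v ?y) \<le> p * (norm ?y)^2" by (simp add: power2_eq_square algebra_simps)
    have g0: "0 \<le> g" unfolding g_def using q0 p0 by simp
    have "g * (?y \<bullet> (P *v ?y)) \<le> g * (p * (norm ?y)^2)" using Vle g0 by (rule mult_left_mono)
    also have "\<dots> = (q / 2) * (norm ?y)^2" unfolding g_def using p0 by (simp add: field_simps)
    finally have "g * (?y \<bullet> (P *v ?y)) + V' s \<le> 0" using V'le by simp
    then show ?thesis by (simp add: mult_nonneg_nonpos)
  qed
  show ?thesis
    using mono_from_deriv[OF t01 dW neg t] unfolding g_def by simp
qed

lemma global_decay:
  fixes A A1 P Q :: "real^'n^'n" and x :: "real \<Rightarrow> real^'n" and ts :: "nat \<Rightarrow> real"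
  assumes sol: "sampled_solution A A1 ts x"
    and ts0: "ts 0 = 0" and tsD: "\<And>k. ts k < ts (Suc k) \<and> ts (Suc k) - ts k \<le> Dl"
    and tsinf: "filterlim ts at_top sequentially"
    and symP: "transpose P = P"
    and nP: "\<And>y. norm (P *v y) \<le> p * norm y" and p0: "0 < p"
    and nA: "\<And>y. norm (A *v y) \<le> a * norm y" and a0: "0 \<le> a"
    and nA1: "\<And>y. norm (A1 *v y) \<le> b * norm y" and b0: "0 \<le> b"
    and Qquad: "\<And>y. q * (norm y)^2 \<le> y \<bullet> (Q *v y)" and q0: "0 \<le> q"
    and Qeq: "\<And>y. y \<bullet> (Q *v y) = - 2 * ((P *v y) \<bullet> ((A + A1) *v y))"
    and th: "(a + b) * Dl \<le> 1/4" and D0: "0 \<le> Dl"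
    and key: "8 * p * b * ((a + b) * Dl) \<le> q / 2"
    and t: "0 \<le> t"
  shows "exp ((q / (2 * p)) * t) * (x t \<bullet> (P *v x t)) \<le> x 0 \<bullet> (P *v x 0)"
proof -
  define W where "W s = exp ((q / (2 * p)) * s) * (x s \<bullet> (P *v x s))" for s
  have step: "W s \<le> W (ts k)" if s: "s \<in> {ts k..ts (Suc k)}" for k s
  proof -
    have der: "\<And>s. s \<in> {ts k..ts (Suc k)} \<Longrightarrow>
      (x has_vector_derivative (A *v x s + A1 *v x (ts k))) (at s within {ts k..ts (Suc k)})"
      using sol unfolding sampled_solution_def by blast
    have t01: "ts k \<le> ts (Suc k)" "ts (Suc k) - ts k \<le> Dl" using tsD[of k] by auto
    have err: "\<And>s. s \<in> {ts k..ts (Suc k)} \<Longrightarrow> norm (x s - x (ts k)) \<le> 4 * ((a + b) * Dl) * norm (x s)"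
      by (rule interval_err[OF der t01 nA nA1 a0 b0 th D0])
    have e0: "0 \<le> (a + b) * Dl" using a0 b0 D0 by simp
    show ?thesis unfolding W_def
      by (rule interval_W[OF der t01(1) symP nP p0 nA1 b0 Qquad q0 Qeq err e0 key s])
  qed
  have chain: "W (ts k) \<le> W 0" for k
  proof (induction k)
    case 0 then show ?case using ts0 by simp
  next
    case (Suc k)
    have "ts (Suc k) \<in> {ts k..ts (Suc k)}" using tsD[of k] by simp
    then show ?case using step Suc by (meson order_trans)
  qed
  have "\<exists>n. t < ts n"
  proof -
    have "eventually (\<lambda>n. t + 1 \<le> ts n) sequentially"
      using tsinf by (simp add: filterlim_at_top)
    then obtain n where "t + 1 \<le> ts n" by (meson eventually_sequentially order_refl)
    then show ?thesis by (intro exI[of _ n]) simp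
  qed
  define n where "n = (LEAST n. t < ts n)"
  have tn: "t < ts n" unfolding n_def using \<open>\<exists>n. t < ts n\<close> by (rule LeastI_ex)
  have n0: "n \<noteq> 0" using tn ts0 t by (cases n) auto
  then obtain k where k: "n = Suc k" by (cases n) auto
  have "\<not> t < ts k" unfolding n_def using k n_def not_less_Least[of k "\<lambda>n. t < ts n"] by simp
  then have "t \<in> {ts k..ts (Suc k)}" using tn k by simp
  then have "W t \<le> W 0" using step chain order_trans by blast
  then show ?thesis unfolding W_def by simp
qed

lemma stable_from_bound:
  fixes A A1 :: "real^'n^'n" and ts :: "nat \<Rightarrow> real"
  assumes l0: "0 < l" and p0: "0 < p" and g0: "0 < g"
    and bnd: "\<And>x t. sampled_solution A A1 ts x \<Longrightarrow> 0 \<le> t \<Longrightarrow>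
        l * (norm (x t))^2 * exp (g * t) \<le> p * (norm (x 0))^2"
  shows "sampled_asymp_stable A A1 ts"
  unfolding sampled_asymp_stable_def
proof (intro conjI allI impI)
  fix e :: real assume e: "0 < e"
  define d where "d = e * sqrt (l / p)"
  have d0: "0 < d" unfolding d_def using e l0 p0 by simp
  have dsq: "p * d^2 = l * e^2" unfolding d_def using l0 p0 by (simp add: power_mult_distrib)
  show "\<exists>d>0. \<forall>x. sampled_solution A A1 ts x \<and> norm (x 0) < d \<longrightarrow> (\<forall>t\<ge>0. norm (x t) < e)"
  proof (intro exI[of _ d] conjI allI impI d0)
    fix x t assume h: "sampled_solution A A1 ts x \<and> norm (x 0) < d" and t: "0 \<le> (t::real)"
    have "(norm (x 0))^2 < d^2" using h by (simp add: power_strict_mono)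
    then have "p * (norm (x 0))^2 < p * d^2" using p0 by simp
    moreover have "l * (norm (x t))^2 \<le> l * (norm (x t))^2 * exp (g * t)"
    proof -
      have "1 \<le> exp (g * t)" using g0 t by simp
      moreover have "0 \<le> l * (norm (x t))^2" using l0 by simp
      ultimately show ?thesis using mult_left_mono[of 1 "exp (g * t)" "l * (norm (x t))^2"] by simp
    qed
    ultimately have "l * (norm (x t))^2 < l * e^2" using bnd[of x t] h t dsq by linarith
    then have "(norm (x t))^2 < e^2" using l0 by simp
    then show "norm (x t) < e" using e by (simp add: power_less_imp_less_base)
  qed
next
  show "\<exists>eta>0. \<forall>x. sampled_solution A A1 ts x \<and> norm (x 0) < eta \<longrightarrow> (x \<longlongrightarrow> 0) at_top"
  proof (intro exI[of _ 1] conjI allI impI zero_less_one)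
    fix x assume h: "sampled_solution A A1 ts x \<and> norm (x 0) < 1"
    define C where "C = p * (norm (x 0))^2 / l"
    have lim: "((\<lambda>t. sqrt (C * exp (- g * t))) \<longlongrightarrow> 0) at_top"
    proof -
      have f1: "filterlim (\<lambda>t. g * t) at_top at_top"
        by (rule filterlim_tendsto_pos_mult_at_top[OF tendsto_const g0 filterlim_ident])
      have f2: "filterlim (\<lambda>t. exp (g * t)) at_top at_top"
        by (rule filterlim_compose[OF exp_at_top f1])
      have "((\<lambda>t. inverse (exp (g * t))) \<longlongrightarrow> 0) at_top"
        by (rule tendsto_inverse_0_at_top[OF f2])
      then have "((\<lambda>t. exp (- g * t)) \<longlongrightarrow> 0) at_top" by (simp add: exp_minus)
      then have "((\<lambda>t. sqrt (C * exp (- g * t))) \<longlongrightarrow> sqrt (C * 0)) at_top"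
        by (intro tendsto_intros)
      then show ?thesis by simp
    qed
    have ev: "eventually (\<lambda>t. norm (x t) \<le> sqrt (C * exp (- g * t))) at_top"
      using eventually_ge_at_top[of "0::real"]
    proof eventually_elim
      case (elim t)
      have "l * (norm (x t))^2 * exp (g * t) \<le> p * (norm (x 0))^2" using bnd[of x t] h elim by simp
      then have "(norm (x t))^2 \<le> C * exp (- g * t)"
        unfolding C_def using l0 by (simp add: field_simps exp_minus)
      then show ?case by (simp add: real_le_rsqrt)
    qed
    show "(x \<longlongrightarrow> 0) at_top"
      by (rule Lim_null_comparison[OF ev lim])
  qed
qed

lemma neg_mv: "(- (M::real^'n^'m)) *v y = - (M *v y)"
  by (simp add: vec_eq_iff matrix_vector_mult_def sum_negf)

theorem proposition1:
  "\<exists>c'>0. \<forall>(A::real^'n^'n) (B::real^'m^'n) (K::real^'n^'m) P Q \<Delta> ts.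
     sym_pos_def P \<and> sym_pos_def Q \<and>
     transpose (A + (- (B ** K))) ** P + P ** (A + (- (B ** K))) = - Q \<and>
     \<Delta> \<le> c' * sigma_min Q / (sigma_max P * (sigma_max A + sigma_max (- (B ** K)))^2) \<and>
     ts 0 = 0 \<and> (\<forall>k. ts k < ts (Suc k) \<and> ts (Suc k) - ts k \<le> \<Delta>) \<and>
     filterlim ts at_top sequentially
     \<longrightarrow> sampled_asymp_stable A (- (B ** K)) ts"
proof (intro exI[of _ "1/16::real"] conjI allI impI)
  show "(0::real) < 1/16" by simp
  fix A :: "real^'n^'n" and B :: "real^'m^'n" and K :: "real^'n^'m" and P Q :: "real^'n^'n"
    and Dl :: real and ts :: "nat \<Rightarrow> real"
  assume H: "sym_pos_def P \<and> sym_pos_def Q \<and>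
     transpose (A + (- (B ** K))) ** P + P ** (A + (- (B ** K))) = - Q \<and>
     Dl \<le> 1/16 * sigma_min Q / (sigma_max P * (sigma_max A + sigma_max (- (B ** K)))^2) \<and>
     ts 0 = 0 \<and> (\<forall>k. ts k < ts (Suc k) \<and> ts (Suc k) - ts k \<le> Dl) \<and>
     filterlim ts at_top sequentially"
  define A1 where "A1 = - (B ** K)"
  define a where "a = sigma_max A"
  define b where "b = sigma_max A1"
  define p where "p = sigma_max P"
  define q where "q = sigma_min Q"
  have sP: "sym_pos_def P" and sQ: "sym_pos_def Q" using H by auto
  have meq: "transpose (A + A1) ** P + P ** (A + A1) = - Q" using H unfolding A1_def by simp
  have Dle: "Dl \<le> 1/16 * q / (p * (a + b)^2)" using H unfolding A1_def a_def b_def p_def q_def by simp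
  have ts0: "ts 0 = 0" and tsD: "\<And>k. ts k < ts (Suc k) \<and> ts (Suc k) - ts k \<le> Dl"
    and tsinf: "filterlim ts at_top sequentially" using H by auto
  have symP: "transpose P = P" and symQ: "transpose Q = Q" using sP sQ unfolding sym_pos_def_def by auto
  have a0: "0 \<le> a" and b0: "0 \<le> b" and pnn: "0 \<le> p" unfolding a_def b_def p_def by (rule sigma_max_nonneg)+
  have nA: "\<And>y. norm (A *v y) \<le> a * norm y" unfolding a_def by (rule norm_mv)
  have nA1: "\<And>y. norm (A1 *v y) \<le> b * norm y" unfolding b_def by (rule norm_mv)
  have nP: "\<And>y. norm (P *v y) \<le> p * norm y" unfolding p_def by (rule norm_mv)
  have Dpos: "0 < Dl" using tsD[of 0] ts0 by linarith
  then have rpos: "0 < 1/16 * q / (p * (a + b)^2)" using Dle by linarith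
  have den: "0 < p * (a + b)^2"
  proof -
    have "0 \<le> p * (a + b)^2" using pnn by simp
    moreover have "p * (a + b)^2 \<noteq> 0"
    proof
      assume z: "p * (a + b)^2 = 0"
      have "1/16 * q / (p * (a + b)^2) = 0" by (simp only: z div_by_0)
      then show False using rpos by linarith
    qed
    ultimately show ?thesis by linarith
  qed
  have q0: "0 < q" using rpos den by (simp add: zero_less_divide_iff)
  have p0: "0 < p" using den pnn by (cases "p = 0") auto
  have L0: "0 < a + b" using den a0 b0 by (cases "a + b = 0") auto
  have Qeq: "y \<bullet> (Q *v y) = - 2 * ((P *v y) \<bullet> ((A + A1) *v y))" for y
  proof -
    have QQ: "Q = - (transpose (A + A1) ** P + P ** (A + A1))" using meq by (metis minus_minus)
    have "Q *v y = - (transpose (A + A1) *v (P *v y) + P *v ((A + A1) *v y))"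
      unfolding QQ by (simp only: neg_mv matrix_vector_mult_add_rdistrib[of "transpose (A + A1) ** P"] matrix_vector_mul_assoc)
    then have "y \<bullet> (Q *v y) = - (((A + A1) *v y) \<bullet> (P *v y) + (P *v y) \<bullet> ((A + A1) *v y))"
      using transp_dot[of y "A + A1" "P *v y"] sym_dot[OF symP, of y "(A + A1) *v y"]
      by (simp add: inner_add_right inner_diff_right)
    then show ?thesis by (simp add: inner_commute)
  qed
  obtain v where nv: "norm v = 1" and vq: "\<And>y. (v \<bullet> (Q *v v)) * (norm y)^2 \<le> y \<bullet> (Q *v y)"
    and ev: "Q *v v = (v \<bullet> (Q *v v)) *\<^sub>R v"
    using quad_min[OF symQ] by blast
  have "v \<noteq> 0" using nv by auto
  then have mu0: "0 < v \<bullet> (Q *v v)" using sQ unfolding sym_pos_def_def by blast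
  have qmu: "q \<le> v \<bullet> (Q *v v)"
  proof -
    have "q \<le> norm (Q *v v)" unfolding q_def by (rule sigma_min_le[OF nv])
    also have "norm (Q *v v) = v \<bullet> (Q *v v)" using ev nv mu0 by (metis norm_scaleR abs_of_pos mult_1_right)
    finally show ?thesis .
  qed
  have Qquad: "q * (norm y)^2 \<le> y \<bullet> (Q *v y)" for y
    using mult_right_mono[OF qmu, of "(norm y)^2"] vq[of y] by simp
  have q2: "q \<le> 2 * p * (a + b)"
  proof -
    have "norm ((A + A1) *v v) \<le> a + b"
    proof -
      have "norm ((A + A1) *v v) \<le> norm (A *v v) + norm (A1 *v v)"
        by (simp add: matrix_vector_mult_add_rdistrib norm_triangle_ineq)
      also have "\<dots> \<le> a + b" using nA[of v] nA1[of v] nv by simp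
      finally show ?thesis .
    qed
    moreover have "norm (P *v v) \<le> p" using nP[of v] nv by simp
    ultimately have "norm (P *v v) * norm ((A + A1) *v v) \<le> p * (a + b)"
      using pnn by (intro mult_mono) auto
    moreover have "- ((P *v v) \<bullet> ((A + A1) *v v)) \<le> norm (P *v v) * norm ((A + A1) *v v)"
      using norm_cauchy_schwarz[of "- (P *v v)" "(A + A1) *v v"] by simp
    ultimately show ?thesis using qmu Qeq[of v] by linarith
  qed
  define L where "L = a + b"
  have LL0: "0 < L" unfolding L_def using L0 .
  have DleL: "Dl \<le> 1/16 * q / (p * L^2)" using Dle unfolding L_def .
  have q2L: "q \<le> 2 * p * L" using q2 unfolding L_def .
  have LD: "L * Dl \<le> q / (16 * p * L)"
  proof -
    have "L * Dl \<le> L * (1/16 * q / (p * L^2))" using DleL LL0 by (intro mult_left_mono) auto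
    also have "\<dots> = q / (16 * p * L)" using LL0 p0 by (simp add: field_simps power2_eq_square)
    finally show ?thesis .
  qed
  have th: "(a + b) * Dl \<le> 1/4"
  proof -
    have "q / (16 * p * L) \<le> 2 * p * L / (16 * p * L)"
      using q2L p0 LL0 by (intro divide_right_mono) auto
    also have "\<dots> = 1/8" using p0 LL0 by simp
    finally have "q / (16 * p * L) \<le> 1/8" .
    then have "L * Dl \<le> 1/4" using LD by linarith
    then show ?thesis unfolding L_def .
  qed
  have key: "8 * p * b * ((a + b) * Dl) \<le> q / 2"
  proof -
    have e0: "0 \<le> L * Dl" using LL0 Dpos by simp
    have bL: "b \<le> L" unfolding L_def using a0 by simp
    have "8 * p * b * (L * Dl) \<le> 8 * p * L * (L * Dl)"
      using p0 bL e0 by (intro mult_right_mono) auto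
    also have "\<dots> \<le> 8 * p * L * (q / (16 * p * L))"
      using LD p0 LL0 by (intro mult_left_mono) auto
    also have "\<dots> = q / 2" using p0 LL0 by (simp add: field_simps)
    finally show ?thesis unfolding L_def .
  qed
  obtain w where nw: "norm w = 1" and wp: "\<And>y. (w \<bullet> (P *v w)) * (norm y)^2 \<le> y \<bullet> (P *v y)"
    using quad_min[OF symP] by blast
  define l where "l = w \<bullet> (P *v w)"
  have "w \<noteq> 0" using nw by auto
  then have l0: "0 < l" using sP unfolding sym_pos_def_def l_def by blast
  define g where "g = q / (2 * p)"
  have g0: "0 < g" unfolding g_def using q0 p0 by simp
  show "sampled_asymp_stable A (- (B ** K)) ts"
    unfolding A1_def[symmetric]
  proof (rule stable_from_bound[OF l0 p0 g0])
    fix x :: "real \<Rightarrow> real^'n" and t :: real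
    assume sol: "sampled_solution A A1 ts x" and t: "0 \<le> t"
    have dec: "exp (g * t) * (x t \<bullet> (P *v x t)) \<le> x 0 \<bullet> (P *v x 0)"
      unfolding g_def
      by (rule global_decay[OF sol ts0 tsD tsinf symP nP p0 nA a0 nA1 b0 Qquad _ Qeq th _ key t])
        (use q0 Dpos in auto)
    have V0: "x 0 \<bullet> (P *v x 0) \<le> p * (norm (x 0))^2"
    proof -
      have "x 0 \<bullet> (P *v x 0) \<le> norm (x 0) * norm (P *v x 0)" by (rule norm_cauchy_schwarz)
      also have "\<dots> \<le> norm (x 0) * (p * norm (x 0))" using nP by (intro mult_left_mono) auto
      finally show ?thesis by (simp add: power2_eq_square algebra_simps)
    qed
    have "l * (norm (x t))^2 * exp (g * t) \<le> (x t \<bullet> (P *v x t)) * exp (g * t)"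
      using wp[of "x t"] unfolding l_def by (intro mult_right_mono) auto
    also have "\<dots> \<le> p * (norm (x 0))^2" using dec V0 by (simp add: mult.commute)
    finally show "l * (norm (x t))^2 * exp (g * t) \<le> p * (norm (x 0))^2" .
  qed
qed

end
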